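(* Let $N\ge1$ and let $\mathbf s$ be the algebra anti-automorphism of $\mathcal H^N$ determined by $\mathbf s(Y_u^i)=Y_{u^*}^i$. Then $m^{op}=\mathbf s\circ m\circ(\mathbf s\otimes\mathbf s)$, $\Delta=(\mathbf s\otimes\mathbf s)\circ\Delta\circ\mathbf s$, and $S_{\mathcal L}=\mathbf s\,S_{\mathcal H}\,\mathbf s$.
   Context: Let $\langle N\rangle=\{1,\dots,N\}$; for a word $u=u(1)\cdots u(p)$ let $|u|=p$ and $u^*=u(p)\cdots u(1)$. $\mathcal H=\mathcal H^N$ is, as an algebra (multiplication $m$), the free unital associative complex algebra on generators $Y_u^i$ ($i\in\langle N\rangle$, $|u|\ge2$); set $Y_j^i=\delta_{ij}1$ for letters. Counit: the algebra homomorphism $\varepsilon$ with $\varepsilon(Y_u^i)=0$. Comultiplication: the algebra homomorphism $\Delta$ with $\Delta(Y_u^i)=\sum_{q=1}^{p}\sum_{(C_1,\dots,C_q)}\sum_{v\in\langle N\rangle^q} Y_{u|C_1}^{v(1)}\cdots Y_{u|C_q}^{v(q)}\otimes Y_v^i$ ($p=|u|$, the middle sum over all partitions of $\{1,\dots,p\}$ into nonempty consecutive intervals $C_1<\dots<C_q$, $u|C_k$ the subword indexed by $C_k$). $S_{\mathcal H}$ is its (invertible) antipode. $m^{op}=m\circ\tau$, $\tau$ the flip. The anti-automorphism $\mathbf s$ acts by $\mathbf s(Y_{u_1}^{i_1}\cdots Y_{u_n}^{i_n})=Y_{u_n^*}^{i_n}\cdots Y_{u_1^*}^{i_1}$. $S_{\mathcal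 L}=S_{\mathcal H}^{-1}$ is the antipode of the left Lagrange Hopf algebra $(\mathcal H,m,\tau\circ\Delta,\varepsilon)$. *)

theory Defs
  imports Complex_Main "HOL-Library.Poly_Mapping"
begin

(* Generators Y_u^i are encoded as pairs (i, u); a monomial Y_{u_1}^{i_1}...Y_{u_n}^{i_n}
   is the list [(i_1,u_1),...,(i_n,u_n)] (empty list = unit 1).  The free algebra H^N is
   the space of finitely supported complex-valued functions on monomials over valid
   generators; H \<otimes> H is the space of finitely supported functions on pairs of
   monomials (the tensor product of the monomial bases). *)

type_synonym gen = "nat \<times> nat list"
type_synonym mono = "gen list"
type_synonym H = "mono \<Rightarrow>\<^sub>0 complex"
type_synonym HH = "(mono \<times> mono) \<Rightarrow>\<^sub>0 complex"

definition valid_gen :: "nat \<Rightarrow> gen \<Rightarrow> bool" where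
  "valid_gen N g \<longleftrightarrow> fst g \<in> {1..N} \<and> set (snd g) \<subseteq> {1..N} \<and> length (snd g) \<ge> 2"

definition Hcar :: "nat \<Rightarrow> H set" where
  "Hcar N = {x. \<forall>mo\<in>Poly_Mapping.keys x. \<forall>g\<in>set mo. valid_gen N g}"

definition HHcar :: "nat \<Rightarrow> HH set" where
  "HHcar N = {t. \<forall>p\<in>Poly_Mapping.keys t. \<forall>g\<in>set (fst p) \<union> set (snd p). valid_gen N g}"

definition smul :: "complex \<Rightarrow> ('a \<Rightarrow>\<^sub>0 complex) \<Rightarrow> ('a \<Rightarrow>\<^sub>0 complex)" where
  "smul c x = Poly_Mapping.map (\<lambda>a. c * a) x"

definition lin :: "('a \<Rightarrow> ('b \<Rightarrow>\<^sub>0 complex)) \<Rightarrow> ('a \<Rightarrow>\<^sub>0 complex) \<Rightarrow> ('b \<Rightarrow>\<^sub>0 complex)" where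
  "lin f x = (\<Sum>a\<in>Poly_Mapping.keys x. smul (Poly_Mapping.lookup x a) (f a))"

definition basis :: "'a \<Rightarrow> ('a \<Rightarrow>\<^sub>0 complex)" where
  "basis a = Poly_Mapping.single a 1"

definition Hone :: H where "Hone = basis []"
definition HHone :: HH where "HHone = basis ([], [])"

definition Hmul :: "H \<Rightarrow> H \<Rightarrow> H" where
  "Hmul x y = lin (\<lambda>a. lin (\<lambda>b. basis (a @ b)) y) x"

definition tens :: "H \<Rightarrow> H \<Rightarrow> HH" where
  "tens x y = lin (\<lambda>a. lin (\<lambda>b. basis (a, b)) y) x"

definition HHmul :: "HH \<Rightarrow> HH \<Rightarrow> HH" where
  "HHmul s t = lin (\<lambda>(a, b). lin (\<lambda>(c, d). basis (a @ c, b @ d)) t) s"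

definition mH :: "HH \<Rightarrow> H" where
  "mH = lin (\<lambda>(a, b). basis (a @ b))"

definition flip :: "HH \<Rightarrow> HH" where
  "flip = lin (\<lambda>(a, b). basis (b, a))"

definition mop :: "HH \<Rightarrow> H" where
  "mop t = mH (flip t)"

definition tensmap :: "(H \<Rightarrow> H) \<Rightarrow> (H \<Rightarrow> H) \<Rightarrow> HH \<Rightarrow> HH" where
  "tensmap f g = lin (\<lambda>(a, b). tens (f (basis a)) (g (basis b)))"

definition s_mono :: "mono \<Rightarrow> mono" where
  "s_mono mo = rev (map (\<lambda>(i, u). (i, rev u)) mo)"

definition sH :: "H \<Rightarrow> H" where
  "sH = lin (\<lambda>mo. basis (s_mono mo))"

(* counit: algebra homomorphism with \<epsilon>(Y_u^i) = 0 *)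
definition epsH :: "H \<Rightarrow> complex" where
  "epsH x = Poly_Mapping.lookup x []"

(* Y_w^i for an arbitrary nonempty word w, with Y_j^i = \<delta>_{ij} 1 for letters *)
definition Y :: "nat \<Rightarrow> nat list \<Rightarrow> H" where
  "Y i w = (if length w \<ge> 2 then basis [(i, w)]
            else if w = [i] then Hone else 0)"

(* partitions of {1..p} into consecutive nonempty intervals C_1 < ... < C_q,
   encoded as the list of subwords u|C_1, ..., u|C_q *)
definition interval_splits :: "nat list \<Rightarrow> nat list list set" where
  "interval_splits u = {ws. concat ws = u \<and> (\<forall>w\<in>set ws. w \<noteq> [])}"

definition words :: "nat \<Rightarrow> nat \<Rightarrow> nat list set" where
  "words N q = {v. length v = q \<and> set v \<subseteq> {1..N}}"

definition Hprod :: "H list \<Rightarrow> H" where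
  "Hprod xs = foldr Hmul xs Hone"

definition Delta_gen :: "nat \<Rightarrow> gen \<Rightarrow> HH" where
  "Delta_gen N g = (case g of (i, u) \<Rightarrow>
     (\<Sum>ws\<in>interval_splits u. \<Sum>v\<in>words N (length ws).
        tens (Hprod (map (\<lambda>k. Y (v ! k) (ws ! k)) [0..<length ws])) (Y i v)))"

definition Delta :: "nat \<Rightarrow> H \<Rightarrow> HH" where
  "Delta N = lin (\<lambda>mo. foldr HHmul (map (Delta_gen N) mo) HHone)"

definition is_antipode :: "nat \<Rightarrow> (H \<Rightarrow> H) \<Rightarrow> bool" where
  "is_antipode N S \<longleftrightarrow>
     (\<forall>x\<in>Hcar N. S x \<in> Hcar N) \<and>
     (\<forall>x\<in>Hcar N. \<forall>y\<in>Hcar N. \<forall>c. S (x + y) = S x + S y \<and> S (smul c x) = smul c (S x)) \<and>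
     (\<forall>x\<in>Hcar N. mH (tensmap S id (Delta N x)) = smul (epsH x) Hone) \<and>
     (\<forall>x\<in>Hcar N. mH (tensmap id S (Delta N x)) = smul (epsH x) Hone)"

end

theory Submission
  imports Defs
begin


abbreviation lk where "lk \<equiv> Poly_Mapping.lookup"
abbreviation ks where "ks \<equiv> Poly_Mapping.keys"

lemma lookup_smul[simp]: "lk (smul c x) a = c * lk x a"
  unfolding smul_def by transfer (simp add: when_def)

lemma lookup_basis: "lk (basis a) b = (if a = b then 1 else 0)"
  by (simp add: basis_def lookup_single when_def)

lemma keys_basis[simp]: "ks (basis a) = {a}"
  by (simp add: basis_def)

lemma lookup_lin: "lk (lin f x) c = (\<Sum>a\<in>ks x. lk x a * lk (f a) c)"
  unfolding lin_def by (simp add: lookup_sum)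

lemma smul_0[simp]: "smul 0 x = 0" by (rule poly_mapping_eqI) simp
lemma smul_z[simp]: "smul c 0 = 0" by (rule poly_mapping_eqI) simp
lemma smul_1[simp]: "smul 1 x = x" by (rule poly_mapping_eqI) simp
lemma smul_add_l: "smul (c + d) x = smul c x + smul d x"
  by (rule poly_mapping_eqI) (simp add: lookup_add algebra_simps)
lemma smul_add_r: "smul c (x + y) = smul c x + smul c y"
  by (rule poly_mapping_eqI) (simp add: lookup_add algebra_simps)
lemma smul_diff_r: "smul c (x - y) = smul c x - smul c y"
  by (rule poly_mapping_eqI) (simp add: lookup_minus algebra_simps)
lemma smul_smul[simp]: "smul c (smul d x) = smul (c * d) x"
  by (rule poly_mapping_eqI) simp
lemma smul_sum: "smul c (sum f A) = (\<Sum>a\<in>A. smul c (f a))"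
  by (rule poly_mapping_eqI) (simp add: lookup_sum sum_distrib_left)
lemma keys_smul: "ks (smul c x) \<subseteq> ks x"
  by (auto simp: in_keys_iff)

lemma lin_superset:
  assumes "finite A" "ks x \<subseteq> A"
  shows "lin f x = (\<Sum>a\<in>A. smul (lk x a) (f a))"
  unfolding lin_def
  by (rule sum.mono_neutral_left) (use assms in \<open>auto simp: in_keys_iff\<close>)

lemma lin_add: "lin f (x + y) = lin f x + lin f y"
proof -
  let ?A = "ks x \<union> ks y"
  have "lin f (x + y) = (\<Sum>a\<in>?A. smul (lk (x+y) a) (f a))"
    by (rule lin_superset) (auto dest: subsetD[OF keys_add])
  also have "\<dots> = (\<Sum>a\<in>?A. smul (lk x a) (f a)) + (\<Sum>a\<in>?A. smul (lk y a) (f a))"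
    by (simp add: lookup_add smul_add_l sum.distrib)
  also have "\<dots> = lin f x + lin f y"
    by (subst (1 2) lin_superset[of ?A]) auto
  finally show ?thesis .
qed

lemma lin_smul: "lin f (smul c x) = smul c (lin f x)"
proof -
  have "lin f (smul c x) = (\<Sum>a\<in>ks x. smul (lk (smul c x) a) (f a))"
    by (rule lin_superset) (auto dest: subsetD[OF keys_smul])
  thus ?thesis by (simp add: lin_def smul_sum)
qed

lemma lin_basis[simp]: "lin f (basis a) = f a"
  by (simp add: lin_def lookup_basis)

lemma lin_zero[simp]: "lin f 0 = 0" by (simp add: lin_def)

lemma lin_cong: "(\<And>a. a \<in> ks x \<Longrightarrow> f a = g a) \<Longrightarrow> lin f x = lin g x"
  unfolding lin_def by (rule sum.cong) auto

lemma lin_fun_add: "lin (\<lambda>a. f a + g a) x = lin f x + lin g x"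
  by (simp add: lin_def smul_add_r sum.distrib)

lemma lin_fun_diff: "lin (\<lambda>a. f a - g a) x = lin f x - lin g x"
  by (simp add: lin_def smul_diff_r sum_subtractf)

lemma lin_fun_smul: "lin (\<lambda>a. smul c (f a)) x = smul c (lin f x)"
  by (simp add: lin_def smul_sum mult.commute)

lemma lin_fun_zero[simp]: "lin (\<lambda>a. 0) x = 0"
  by (simp add: lin_def)

lemma lin_id: "lin basis x = x"
proof (rule poly_mapping_eqI)
  fix k
  have "lk (lin basis x) k = (\<Sum>a\<in>ks x. if a = k then lk x a else 0)"
    unfolding lookup_lin lookup_basis by (rule sum.cong) auto
  also have "\<dots> = lk x k" by (simp add: sum.delta' in_keys_iff)
  finally show "lk (lin basis x) k = lk x k" .
qed

lemma smul_sum2: "smul c (\<Sum>b\<in>B. smul (d b) (F b)) = (\<Sum>b\<in>B. smul (c * d b) (F b))"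
  by (simp add: smul_sum)

lemma lin_swap: "lin (\<lambda>a. lin (\<lambda>b. F a b) y) x = lin (\<lambda>b. lin (\<lambda>a. F a b) x) y"
  unfolding lin_def smul_sum2
  by (subst sum.swap) (simp add: mult.commute)

lemma keys_lin: "ks (lin f x) \<subseteq> (\<Union>a\<in>ks x. ks (f a))"
proof
  fix c assume c: "c \<in> ks (lin f x)"
  show "c \<in> (\<Union>a\<in>ks x. ks (f a))"
  proof (rule ccontr)
    assume "c \<notin> (\<Union>a\<in>ks x. ks (f a))"
    hence "lk (lin f x) c = 0" by (auto simp: lookup_lin in_keys_iff intro!: sum.neutral)
    with c show False by (simp add: in_keys_iff)
  qed
qed

definition linmap :: "(('a \<Rightarrow>\<^sub>0 complex) \<Rightarrow> ('b \<Rightarrow>\<^sub>0 complex)) \<Rightarrow> bool" where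
  "linmap L \<longleftrightarrow> (\<forall>x y. L (x + y) = L x + L y) \<and> (\<forall>c x. L (smul c x) = smul c (L x))"

lemma linmap_lin[simp]: "linmap (lin f)"
  by (simp add: linmap_def lin_add lin_smul)

lemma linmap_zero: "linmap L \<Longrightarrow> L 0 = 0"
  unfolding linmap_def by (metis smul_0)

lemma linmap_add: "linmap L \<Longrightarrow> L (x + y) = L x + L y"
  unfolding linmap_def by blast

lemma linmap_smul: "linmap L \<Longrightarrow> L (smul c x) = smul c (L x)"
  unfolding linmap_def by blast

lemma linmap_sum: "linmap L \<Longrightarrow> L (sum g A) = (\<Sum>a\<in>A. L (g a))"
  by (induction A rule: infinite_finite_induct) (auto simp: linmap_zero linmap_add)

lemma linmap_diff: "linmap L \<Longrightarrow> L (x - y) = L x - L y"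
proof -
  assume L: "linmap L"
  have "L x = L ((x - y) + y)" by simp
  also have "\<dots> = L (x - y) + L y" using L by (rule linmap_add)
  finally show ?thesis by simp
qed

lemma linmap_apply_lin: "linmap L \<Longrightarrow> L (lin f x) = lin (\<lambda>a. L (f a)) x"
  unfolding lin_def by (simp add: linmap_sum linmap_smul)

lemma lin_lin: "lin g (lin f x) = lin (\<lambda>a. lin g (f a)) x"
  by (rule linmap_apply_lin) simp

lemma linmap_eq_lin: "linmap L \<Longrightarrow> L x = lin (\<lambda>a. L (basis a)) x"
  by (metis lin_id linmap_apply_lin)

lemma linmap_comp: "linmap L \<Longrightarrow> linmap M \<Longrightarrow> linmap (\<lambda>x. L (M x))"
  by (simp add: linmap_def)



definition bilin :: "(('a \<Rightarrow>\<^sub>0 complex) \<Rightarrow> ('b \<Rightarrow>\<^sub>0 complex) \<Rightarrow> ('c \<Rightarrow>\<^sub>0 complex)) \<Rightarrow> bool" where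
  "bilin F \<longleftrightarrow> (\<forall>y. linmap (\<lambda>x. F x y)) \<and> (\<forall>x. linmap (F x))"

lemma bilin_expand:
  assumes "bilin F"
  shows "F x y = lin (\<lambda>a. lin (\<lambda>b. F (basis a) (basis b)) y) x"
proof -
  have "F x y = lin (\<lambda>a. F (basis a) y) x"
    using assms unfolding bilin_def by (intro linmap_eq_lin[of "\<lambda>x. F x y"]) auto
  also have "\<dots> = lin (\<lambda>a. lin (\<lambda>b. F (basis a) (basis b)) y) x"
    using assms unfolding bilin_def by (intro lin_cong linmap_eq_lin) auto
  finally show ?thesis .
qed

lemma bilin_eq:
  assumes "bilin F" "bilin G" "\<And>a b. F (basis a) (basis b) = G (basis a) (basis b)"
  shows "F x y = G x y"
  by (subst bilin_expand[OF assms(1)], subst bilin_expand[OF assms(2)]) (simp add: assms(3))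

lemma linmap_eq:
  assumes "linmap F" "linmap G" "\<And>a. F (basis a) = G (basis a)"
  shows "F x = G x"
  by (subst linmap_eq_lin[OF assms(1)], subst linmap_eq_lin[OF assms(2)]) (simp add: assms(3))

lemma linmap_fun_lin: "(\<And>k. linmap (\<lambda>x. G x k)) \<Longrightarrow> linmap (\<lambda>x. lin (G x) t)"
  unfolding linmap_def lin_def by (simp add: smul_add_r sum.distrib smul_sum mult.commute)

lemma linmap_lin_fun:
  "(\<And>k. linmap (\<lambda>x. G x k)) \<Longrightarrow> linmap (\<lambda>x. lin (\<lambda>k. G x k) t)"
  by (rule linmap_fun_lin)

lemma bilin_lin2: "bilin (\<lambda>x y. lin (\<lambda>a. lin (\<lambda>b. \<beta> a b) y) x)"
  unfolding bilin_def
proof safe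
  fix x
  show "linmap (\<lambda>y. lin (\<lambda>a. lin (\<lambda>b. \<beta> a b) y) x)"
    by (rule linmap_fun_lin) simp
qed simp

lemma bilin_linmap_l: "bilin F \<Longrightarrow> linmap (\<lambda>x. F x y)" unfolding bilin_def by blast
lemma bilin_linmap_r: "bilin F \<Longrightarrow> linmap (F x)" unfolding bilin_def by blast

lemma bilin_compose:
  assumes "bilin F" "linmap L" "linmap M1" "linmap M2"
  shows "bilin (\<lambda>x y. L (F (M1 x) (M2 y)))"
  using assms unfolding bilin_def linmap_def by simp

lemma bilin_swap: "bilin F \<Longrightarrow> bilin (\<lambda>x y. F y x)"
  unfolding bilin_def by blast

definition trilin where
  "trilin F \<longleftrightarrow> (\<forall>y z. linmap (\<lambda>x. F x y z)) \<and> (\<forall>x z. linmap (\<lambda>y. F x y z)) \<and> (\<forall>x y. linmap (F x y))"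

lemma trilin_eq:
  assumes "trilin F" "trilin G" "\<And>a b c. F (basis a) (basis b) (basis c) = G (basis a) (basis b) (basis c)"
  shows "F x y z = G x y z"
proof -
  have "bilin (\<lambda>x y. F x y z)" "bilin (\<lambda>x y. G x y z)"
    using assms(1,2) unfolding trilin_def bilin_def by auto
  moreover have "F (basis a) (basis b) z = G (basis a) (basis b) z" for a b
  proof (rule linmap_eq[where F="F (basis a) (basis b)" and G="G (basis a) (basis b)"])
    show "linmap (F (basis a) (basis b))" "linmap (G (basis a) (basis b))"
      using assms(1,2) unfolding trilin_def by blast+
  qed (rule assms(3))
  ultimately show ?thesis by (rule bilin_eq[where F="\<lambda>x y. F x y z" and G = "\<lambda>x y. G x y z"])
qed

lemma assoc_gen:
  assumes B: "bilin B" and "\<And>a b c. B (B (basis a) (basis b)) (basis c) = B (basis a) (B (basis b) (basis c))"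
  shows "B (B x y) z = B x (B y z)"
proof (rule trilin_eq[where F = "\<lambda>x y z. B (B x y) z" and G = "\<lambda>x y z. B x (B y z)"])
  have l: "linmap (\<lambda>x. B x y)" and r: "linmap (B x)" for x y
    using B unfolding bilin_def by blast+
  show "trilin (\<lambda>x y z. B (B x y) z)" unfolding trilin_def
    by (intro allI conjI linmap_comp[OF l l] linmap_comp[OF l r] r)
  show "trilin (\<lambda>x y z. B x (B y z))" unfolding trilin_def
    by (intro allI conjI linmap_comp[OF r l] linmap_comp[OF r r] l)
qed (rule assms(2))

lemma bilin_Hmul: "bilin Hmul"
  unfolding Hmul_def[abs_def] by (rule bilin_lin2)
lemma Hmul_basis[simp]: "Hmul (basis a) (basis b) = basis (a @ b)"
  by (simp add: Hmul_def)
lemma bilin_tens: "bilin tens"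
  unfolding tens_def[abs_def] by (rule bilin_lin2)
lemma tens_basis[simp]: "tens (basis a) (basis b) = basis (a, b)"
  by (simp add: tens_def)

definition pmul :: "mono \<times> mono \<Rightarrow> mono \<times> mono \<Rightarrow> mono \<times> mono" where
  "pmul p q = (fst p @ fst q, snd p @ snd q)"

lemma HHmul_alt: "HHmul s t = lin (\<lambda>p. lin (\<lambda>q. basis (pmul p q)) t) s"
  unfolding HHmul_def
  by (rule lin_cong) (auto simp: pmul_def split: prod.splits intro: lin_cong)

lemma bilin_HHmul: "bilin HHmul"
  unfolding HHmul_alt[abs_def] by (rule bilin_lin2)
lemma HHmul_basis[simp]: "HHmul (basis p) (basis q) = basis (pmul p q)"
  by (simp add: HHmul_alt)

lemma linmap_sH: "linmap sH" unfolding sH_def by simp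
lemma sH_basis[simp]: "sH (basis m) = basis (s_mono m)" by (simp add: sH_def)
lemma linmap_mH: "linmap mH" unfolding mH_def by simp
lemma mH_basis[simp]: "mH (basis (a, b)) = basis (a @ b)" by (simp add: mH_def)
lemma linmap_flip: "linmap flip" unfolding flip_def by simp
lemma flip_basis[simp]: "flip (basis (a, b)) = basis (b, a)" by (simp add: flip_def)
lemma linmap_tensmap: "linmap (tensmap f g)" unfolding tensmap_def by simp
lemma tensmap_basis[simp]: "tensmap f g (basis (a, b)) = tens (f (basis a)) (g (basis b))"
  by (simp add: tensmap_def)

lemma s_mono_append[simp]: "s_mono (a @ b) = s_mono b @ s_mono a"
  by (simp add: s_mono_def)
lemma s_mono_s_mono[simp]: "s_mono (s_mono a) = a"
  by (induction a) (auto simp: s_mono_def)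
lemma s_mono_Nil[simp]: "s_mono [] = []" by (simp add: s_mono_def)

lemma Hmul_assoc: "Hmul (Hmul x y) z = Hmul x (Hmul y z)"
  by (rule assoc_gen[OF bilin_Hmul]) simp
lemma HHmul_assoc: "HHmul (HHmul x y) z = HHmul x (HHmul y z)"
  by (rule assoc_gen[OF bilin_HHmul]) (simp add: pmul_def)

lemma linmap_id: "linmap (\<lambda>x. x)" by (simp add: linmap_def)

lemma Hmul_one_l[simp]: "Hmul Hone x = x"
  by (rule linmap_eq[OF bilin_linmap_r[OF bilin_Hmul] linmap_id]) (simp add: Hone_def)
lemma Hmul_one_r[simp]: "Hmul x Hone = x"
  by (rule linmap_eq[OF bilin_linmap_l[OF bilin_Hmul] linmap_id]) (simp add: Hone_def)
lemma HHmul_one_l[simp]: "HHmul HHone x = x"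
  by (rule linmap_eq[OF bilin_linmap_r[OF bilin_HHmul] linmap_id]) (simp add: HHone_def pmul_def)
lemma HHmul_one_r[simp]: "HHmul x HHone = x"
  by (rule linmap_eq[OF bilin_linmap_l[OF bilin_HHmul] linmap_id]) (simp add: HHone_def pmul_def)

lemma mH_tens: "mH (tens x y) = Hmul x y"
  by (rule bilin_eq[where F = "\<lambda>x y. mH (tens x y)"])
     (auto intro: bilin_compose[OF bilin_tens linmap_mH linmap_id linmap_id, simplified] bilin_Hmul)

lemma sH_Hmul: "sH (Hmul x y) = Hmul (sH y) (sH x)"
  by (rule bilin_eq[where F = "\<lambda>x y. sH (Hmul x y)" and G = "\<lambda>x y. Hmul (sH y) (sH x)"])
     (auto intro: bilin_compose[OF bilin_Hmul linmap_sH linmap_id linmap_id, simplified]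
        bilin_swap[OF bilin_compose[OF bilin_Hmul linmap_id linmap_sH linmap_sH, simplified]])

lemma sH_one[simp]: "sH Hone = Hone" by (simp add: Hone_def)

abbreviation T where "T \<equiv> tensmap sH sH"

lemma T_tens: "T (tens x y) = tens (sH x) (sH y)"
  by (rule bilin_eq[where F = "\<lambda>x y. T (tens x y)" and G = "\<lambda>x y. tens (sH x) (sH y)"])
     (auto intro: bilin_compose[OF bilin_tens linmap_tensmap linmap_id linmap_id, simplified]
        bilin_compose[OF bilin_tens linmap_id linmap_sH linmap_sH, simplified])

lemma T_basis: "T (basis p) = basis (s_mono (fst p), s_mono (snd p))"
  by (cases p) simp

lemma T_HHmul: "T (HHmul x y) = HHmul (T y) (T x)"
  by (rule bilin_eq[where F = "\<lambda>x y. T (HHmul x y)" and G = "\<lambda>x y. HHmul (T y) (T x)"])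
     (auto simp: T_basis pmul_def intro: bilin_compose[OF bilin_HHmul linmap_tensmap linmap_id linmap_id, simplified]
        bilin_swap[OF bilin_compose[OF bilin_HHmul linmap_id linmap_tensmap linmap_tensmap, simplified]])

lemma T_one[simp]: "T HHone = HHone" by (simp add: HHone_def)

lemma part1: "mop t = sH (mH (tensmap sH sH t))"
proof (rule linmap_eq[where F = mop and G = "\<lambda>t. sH (mH (tensmap sH sH t))"])
  show "linmap mop" unfolding mop_def[abs_def] by (rule linmap_comp[OF linmap_mH linmap_flip])
  show "linmap (\<lambda>t. sH (mH (tensmap sH sH t)))"
    by (rule linmap_comp[OF linmap_sH linmap_comp[OF linmap_mH linmap_tensmap]])
  fix p show "mop (basis p) = sH (mH (tensmap sH sH (basis p)))"
    by (cases p) (simp add: mop_def)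
qed



definition ygen :: "nat \<Rightarrow> nat list \<Rightarrow> mono" where
  "ygen j w = (if 2 \<le> length w then [(j, w)] else [])"
definition ycoef :: "nat \<Rightarrow> nat list \<Rightarrow> complex" where
  "ycoef j w = (if 2 \<le> length w \<or> w = [j] then 1 else 0)"

lemma Y_alt: "Y j w = smul (ycoef j w) (basis (ygen j w))"
  by (auto simp: Y_def ycoef_def ygen_def Hone_def)

lemma Hmul_smul_basis: "Hmul (smul c (basis a)) (smul d (basis b)) = smul (c * d) (basis (a @ b))"
  using linmap_smul[OF bilin_linmap_l[OF bilin_Hmul], of c "basis a" "smul d (basis b)"]
        linmap_smul[OF bilin_linmap_r[OF bilin_Hmul], of "basis a" d "basis b"]
  by (simp add: mult.commute)

lemma tens_smul_basis: "tens (smul c (basis a)) (smul d (basis b)) = smul (c * d) (basis (a, b))"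
  using linmap_smul[OF bilin_linmap_l[OF bilin_tens], of c "basis a" "smul d (basis b)"]
        linmap_smul[OF bilin_linmap_r[OF bilin_tens], of "basis a" d "basis b"]
  by (simp add: mult.commute)

lemma Hprod_formula:
  "Hprod (map (\<lambda>k. smul (c k) (basis (m k))) xs) = smul (prod_list (map c xs)) (basis (concat (map m xs)))"
proof (induction xs)
  case Nil thus ?case by (simp add: Hprod_def Hone_def)
next
  case (Cons x xs)
  thus ?case by (simp add: Hprod_def Hmul_smul_basis[symmetric])
qed

lemma map_idx_zip: "length v = length ws \<Longrightarrow>
  map (\<lambda>k. f (v ! k) (ws ! k)) [0..<length ws] = map (\<lambda>(a, w). f a w) (zip v ws)"
  by (rule nth_equalityI) auto

definition cf :: "nat \<Rightarrow> nat list list \<Rightarrow> nat list \<Rightarrow> complex" where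
  "cf i ws v = prod_list (map (\<lambda>(a, w). ycoef a w) (zip v ws)) * ycoef i v"
definition MM :: "nat list list \<Rightarrow> nat list \<Rightarrow> mono" where
  "MM ws v = concat (map (\<lambda>(a, w). ygen a w) (zip v ws))"

lemma Delta_gen_alt: "Delta_gen N (i, u) =
  (\<Sum>ws\<in>interval_splits u. \<Sum>v\<in>words N (length ws). smul (cf i ws v) (basis (MM ws v, ygen i v)))"
proof -
  have "tens (Hprod (map (\<lambda>k. Y (v ! k) (ws ! k)) [0..<length ws])) (Y i v)
      = smul (cf i ws v) (basis (MM ws v, ygen i v))" if "v \<in> words N (length ws)" for ws v
  proof -
    have len: "length v = length ws" using that by (simp add: words_def)
    have "map (\<lambda>k. Y (v ! k) (ws ! k)) [0..<length ws] = map (\<lambda>(a, w). Y a w) (zip v ws)"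
      by (rule map_idx_zip[OF len])
    also have "\<dots> = map (\<lambda>z. smul (case z of (a, w) \<Rightarrow> ycoef a w) (basis (case z of (a, w) \<Rightarrow> ygen a w))) (zip v ws)"
      by (auto simp: Y_alt)
    finally show ?thesis
      by (simp add: Hprod_formula Y_alt tens_smul_basis cf_def MM_def)
  qed
  thus ?thesis unfolding Delta_gen_def by (auto intro!: sum.cong)
qed

lemma T_smul_basis: "T (smul c (basis (a, b))) = smul c (basis (s_mono a, s_mono b))"
  by (simp add: linmap_smul[OF linmap_tensmap])

lemma linmap_T: "linmap T" by (rule linmap_tensmap)

lemma prod_list_rev: "prod_list (rev (xs :: complex list)) = prod_list xs"
  by (induction xs) (auto simp: mult.commute)

lemma s_mono_concat: "s_mono (concat xs) = concat (rev (map s_mono xs))"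
  by (induction xs) auto

lemma s_ygen: "s_mono (ygen a (rev w)) = ygen a w"
  by (simp add: ygen_def s_mono_def)
lemma ycoef_rev: "ycoef a (rev w) = ycoef a w"
  by (auto simp: ycoef_def)

lemma splits_bij: "bij_betw (\<lambda>ws. rev (map rev ws)) (interval_splits u) (interval_splits (rev u))"
proof (rule bij_betw_byWitness[where f' = "\<lambda>ws. rev (map rev ws)"])
  show "\<forall>a\<in>interval_splits u. rev (map rev (rev (map rev a))) = a" by (simp add: rev_map)
  show "\<forall>a\<in>interval_splits (rev u). rev (map rev (rev (map rev a))) = a" by (simp add: rev_map)
  show "(\<lambda>ws. rev (map rev ws)) ` interval_splits u \<subseteq> interval_splits (rev u)"
    by (auto simp: interval_splits_def rev_concat rev_map)
  show "(\<lambda>ws. rev (map rev ws)) ` interval_splits (rev u) \<subseteq> interval_splits u"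
    by (auto simp: interval_splits_def) (metis rev_concat rev_map rev_rev_ident)
qed

lemma words_bij: "bij_betw rev (words N n) (words N n)"
  by (rule bij_betw_byWitness[where f' = rev]) (auto simp: words_def)

lemma T_Delta_gen: "T (Delta_gen N (i, rev u)) = Delta_gen N (i, u)"
proof -
  have "T (Delta_gen N (i, rev u)) =
    (\<Sum>ws\<in>interval_splits (rev u). \<Sum>v\<in>words N (length ws).
        smul (cf i ws v) (basis (s_mono (MM ws v), s_mono (ygen i v))))"
    by (simp add: Delta_gen_alt linmap_sum[OF linmap_T] T_smul_basis)
  also have "\<dots> = (\<Sum>ws\<in>interval_splits u. \<Sum>v\<in>words N (length ws).
        smul (cf i (rev (map rev ws)) v) (basis (s_mono (MM (rev (map rev ws)) v), s_mono (ygen i v))))"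
    using sum.reindex_bij_betw[OF splits_bij, of "\<lambda>ws :: nat list list. \<Sum>v\<in>words N (length ws).
        smul (cf i ws v) (basis (s_mono (MM ws v), s_mono (ygen i v)))"] by simp
  also have "\<dots> = (\<Sum>ws\<in>interval_splits u. \<Sum>v\<in>words N (length ws).
        smul (cf i (rev (map rev ws)) (rev v)) (basis (s_mono (MM (rev (map rev ws)) (rev v)), s_mono (ygen i (rev v)))))"
    by (rule sum.cong[OF refl], rule sum.reindex_bij_betw[OF words_bij, symmetric])
  also have "\<dots> = (\<Sum>ws\<in>interval_splits u. \<Sum>v\<in>words N (length ws). smul (cf i ws v) (basis (MM ws v, ygen i v)))"
  proof (intro sum.cong refl)
    fix ws :: "nat list list" and v :: "nat list" assume "v \<in> words N (length ws)"
    hence len: "length v = length ws" by (simp add: words_def)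
    have z: "zip (rev v) (rev (map rev ws)) = rev (map (\<lambda>(a, w). (a, rev w)) (zip v ws))"
      using len by (simp add: zip_rev zip_map2)
    have "cf i (rev (map rev ws)) (rev v) = cf i ws v"
      unfolding cf_def z by (simp add: rev_map[symmetric] prod_list_rev ycoef_rev o_def split_def)
    moreover have "s_mono (MM (rev (map rev ws)) (rev v)) = MM ws v"
      unfolding MM_def z by (simp add: s_mono_concat rev_map[symmetric] case_prod_beta o_def s_ygen split_def)
    moreover have "s_mono (ygen i (rev v)) = ygen i v" by (rule s_ygen)
    ultimately show "smul (cf i (rev (map rev ws)) (rev v)) (basis (s_mono (MM (rev (map rev ws)) (rev v)), s_mono (ygen i (rev v))))
       = smul (cf i ws v) (basis (MM ws v, ygen i v))" by simp
  qed
  also have "\<dots> = Delta_gen N (i, u)" by (simp add: Delta_gen_alt)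
  finally show ?thesis .
qed

definition DM :: "nat \<Rightarrow> mono \<Rightarrow> HH" where
  "DM N mo = foldr HHmul (map (Delta_gen N) mo) HHone"

lemma foldr_HHmul: "foldr HHmul xs z = HHmul (foldr HHmul xs HHone) z"
  by (induction xs) (auto simp: HHmul_assoc)

lemma DM_append: "DM N (a @ b) = HHmul (DM N a) (DM N b)"
  unfolding DM_def by (simp, subst foldr_HHmul, simp)

lemma DM_Nil[simp]: "DM N [] = HHone" by (simp add: DM_def)
lemma DM_Cons: "DM N (g # mo) = HHmul (Delta_gen N g) (DM N mo)" by (simp add: DM_def)

lemma Delta_basis[simp]: "Delta N (basis mo) = DM N mo"
  by (simp add: Delta_def DM_def)

lemma Delta_lin: "Delta N x = lin (DM N) x"
  by (simp add: Delta_def DM_def[abs_def])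

lemma s_mono_Cons: "s_mono (g # mo) = s_mono mo @ [(fst g, rev (snd g))]"
  by (simp add: s_mono_def case_prod_beta)

lemma T_DM: "T (DM N (s_mono mo)) = DM N mo"
proof (induction mo)
  case Nil thus ?case by simp
next
  case (Cons g mo)
  obtain i u where g: "g = (i, u)" by (cases g)
  have "DM N (s_mono (g # mo)) = HHmul (DM N (s_mono mo)) (Delta_gen N (i, rev u))"
    by (simp add: s_mono_Cons DM_append DM_Cons g)
  hence "T (DM N (s_mono (g # mo))) = HHmul (T (Delta_gen N (i, rev u))) (T (DM N (s_mono mo)))"
    by (simp add: T_HHmul)
  also have "\<dots> = DM N (g # mo)" by (simp add: T_Delta_gen Cons DM_Cons g)
  finally show ?case .
qed

lemma part2: "Delta N x = tensmap sH sH (Delta N (sH x))"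
proof -
  have "Delta N (sH x) = lin (\<lambda>m. DM N (s_mono m)) x"
    by (simp add: Delta_lin sH_def lin_lin)
  hence "T (Delta N (sH x)) = lin (\<lambda>m. T (DM N (s_mono m))) x"
    by (simp add: linmap_apply_lin[OF linmap_T])
  also have "\<dots> = Delta N x" by (simp add: T_DM Delta_lin)
  finally show ?thesis by simp
qed



definition validm :: "nat \<Rightarrow> mono \<Rightarrow> bool" where
  "validm N mo \<longleftrightarrow> (\<forall>g\<in>set mo. valid_gen N g)"
definition deg :: "mono \<Rightarrow> nat" where
  "deg mo = sum_list (map (\<lambda>g. length (snd g) - 1) mo)"
definition Low :: "nat \<Rightarrow> nat \<Rightarrow> HH set" where
  "Low N d = {t. \<forall>p\<in>ks t. validm N (fst p) \<and> validm N (snd p) \<and> deg (fst p) < d}"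

lemma validm_append[simp]: "validm N (a @ b) \<longleftrightarrow> validm N a \<and> validm N b"
  by (auto simp: validm_def)
lemma validm_Nil[simp]: "validm N []" by (simp add: validm_def)
lemma validm_Cons[simp]: "validm N (g # a) \<longleftrightarrow> valid_gen N g \<and> validm N a"
  by (simp add: validm_def)
lemma deg_append[simp]: "deg (a @ b) = deg a + deg b" by (simp add: deg_def)
lemma deg_Nil[simp]: "deg [] = 0" by (simp add: deg_def)
lemma deg_Cons: "deg (g # a) = (length (snd g) - 1) + deg a" by (simp add: deg_def)
lemma deg_concat: "deg (concat xs) = sum_list (map deg xs)" by (induction xs) auto

lemma Low_zero[simp]: "0 \<in> Low N d" by (simp add: Low_def)
lemma Low_add: "s \<in> Low N d \<Longrightarrow> t \<in> Low N d \<Longrightarrow> s + t \<in> Low N d"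
  unfolding Low_def by (auto dest!: subsetD[OF keys_add])
lemma Low_smul: "s \<in> Low N d \<Longrightarrow> smul c s \<in> Low N d"
  unfolding Low_def by (auto dest!: subsetD[OF keys_smul])
lemma Low_sum: "(\<And>a. a \<in> A \<Longrightarrow> f a \<in> Low N d) \<Longrightarrow> sum f A \<in> Low N d"
  by (induction A rule: infinite_finite_induct) (auto intro: Low_add)
lemma Low_basis: "validm N (fst p) \<Longrightarrow> validm N (snd p) \<Longrightarrow> deg (fst p) < d \<Longrightarrow> basis p \<in> Low N d"
  by (simp add: Low_def)

lemma keys_HHmul: "ks (HHmul s t) \<subseteq> {pmul p q |p q. p \<in> ks s \<and> q \<in> ks t}"
proof
  fix k assume k: "k \<in> ks (HHmul s t)"
  have "k \<in> (\<Union>p\<in>ks s. ks (lin (\<lambda>q. basis (pmul p q)) t))"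
    by (rule subsetD[OF keys_lin]) (use k in \<open>simp add: HHmul_alt\<close>)
  then obtain p where p: "p \<in> ks s" "k \<in> ks (lin (\<lambda>q. basis (pmul p q)) t)" by blast
  have "k \<in> (\<Union>q\<in>ks t. ks (basis (pmul p q)))" by (rule subsetD[OF keys_lin]) (rule p(2))
  then obtain q where q: "q \<in> ks t" "k \<in> ks (basis (pmul p q))" by blast
  hence "k = pmul p q" by simp
  thus "k \<in> {pmul p q |p q. p \<in> ks s \<and> q \<in> ks t}" using p(1) q(1) by blast
qed

lemma Low_HHmul:
  assumes "\<And>p q. p \<in> ks s \<Longrightarrow> q \<in> ks t \<Longrightarrow>
     validm N (fst p) \<and> validm N (fst q) \<and> validm N (snd p) \<and> validm N (snd q) \<and> deg (fst p) + deg (fst q) < d"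
  shows "HHmul s t \<in> Low N d"
  unfolding Low_def using keys_HHmul[of s t] assms by (fastforce simp: pmul_def)

lemma length_concat_nonempty:
  "(\<forall>w\<in>set ws. w \<noteq> []) \<Longrightarrow> sum_list (map (\<lambda>w. length w - 1) ws) + length ws = length (concat ws)"
proof (induction ws)
  case (Cons a ws)
  hence "length a \<ge> 1" "sum_list (map (\<lambda>w. length w - 1) ws) + length ws = length (concat ws)"
    by (auto simp: Suc_le_eq)
  thus ?case by simp
qed simp

lemma finite_splits: "finite (interval_splits u)"
proof -
  let ?W = "{w. set w \<subseteq> set u \<and> length w \<le> length u}"
  have "interval_splits u \<subseteq> {ws. set ws \<subseteq> ?W \<and> length ws \<le> length u}"
  proof
    fix ws assume ws: "ws \<in> interval_splits u"
    hence c: "concat ws = u" and ne: "\<forall>w\<in>set ws. w \<noteq> []" by (auto simp: interval_splits_def)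
    have l: "length ws \<le> length u" using length_concat_nonempty[OF ne] unfolding c by linarith
    have "w \<in> ?W" if w: "w \<in> set ws" for w
    proof -
      have "set w \<subseteq> set u" using w c by auto
      moreover have "length w \<le> sum_list (map length ws)" using w by (simp add: member_le_sum_list)
      ultimately show ?thesis by (simp add: length_concat c[symmetric])
    qed
    thus "ws \<in> {ws. set ws \<subseteq> ?W \<and> length ws \<le> length u}" using l by blast
  qed
  moreover have "finite {ws. set ws \<subseteq> ?W \<and> length ws \<le> length u}"
    by (intro finite_lists_length_le) simp
  ultimately show ?thesis by (rule finite_subset)
qed

lemma deg_ygen: "deg (ygen a w) = length w - 1"
  by (simp add: ygen_def deg_def)

lemma deg_MM: "length v = length ws \<Longrightarrow> deg (MM ws v) = sum_list (map (\<lambda>w. length w - 1) ws)"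
proof -
  assume len: "length v = length ws"
  have "map (deg \<circ> (\<lambda>(a, w). ygen a w)) (zip v ws) = map (\<lambda>w. length w - 1) (map snd (zip v ws))"
    by (auto simp: deg_ygen)
  thus ?thesis using len by (simp add: MM_def deg_concat)
qed

lemma validm_MM:
  assumes "v \<in> words N (length ws)" "\<forall>w\<in>set ws. set w \<subseteq> {1..N}"
  shows "validm N (MM ws v)"
  unfolding validm_def
proof
  fix g assume "g \<in> set (MM ws v)"
  then obtain a w where aw: "(a, w) \<in> set (zip v ws)" "g \<in> set (ygen a w)"
    unfolding MM_def by auto
  have "a \<in> set v" "w \<in> set ws" using set_zip_leftD[OF aw(1)] set_zip_rightD[OF aw(1)] by auto
  thus "valid_gen N g" using aw(2) assms by (auto simp: ygen_def valid_gen_def words_def split: if_splits)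
qed

lemma DG:
  assumes "valid_gen N (i, u)"
  shows "\<exists>R\<in>Low N (length u - 1). Delta_gen N (i, u) = basis ([(i, u)], []) + R"
proof -
  have i: "i \<in> {1..N}" and uN: "set u \<subseteq> {1..N}" and lu: "2 \<le> length u"
    using assms by (auto simp: valid_gen_def)
  define F where "F ws = (\<Sum>v\<in>words N (length ws). smul (cf i ws v) (basis (MM ws v, ygen i v)))" for ws
  have u_in: "[u] \<in> interval_splits u" using lu by (auto simp: interval_splits_def)
  have D: "Delta_gen N (i, u) = F [u] + (\<Sum>ws\<in>interval_splits u - {[u]}. F ws)"
    unfolding Delta_gen_alt F_def[symmetric] by (rule sum.remove[OF finite_splits u_in])
  have w1: "words N (Suc 0) = (\<lambda>j. [j]) ` {1..N}"
    by (auto simp: words_def length_Suc_conv)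
  have "F [u] = (\<Sum>j\<in>{1..N}. smul (cf i [u] [j]) (basis (MM [u] [j], ygen i [j])))"
    unfolding F_def by (simp add: w1 sum.reindex inj_on_def)
  also have "\<dots> = (\<Sum>j\<in>{1..N}. if i = j then basis ([(i, u)], []) else 0)"
    using lu by (intro sum.cong refl) (auto simp: cf_def ycoef_def MM_def ygen_def)
  also have "\<dots> = basis ([(i, u)], [])" using i by (simp add: sum.delta)
  finally have F1: "F [u] = basis ([(i, u)], [])" .
  have "F ws \<in> Low N (length u - 1)" if ws: "ws \<in> interval_splits u - {[u]}" for ws
    unfolding F_def
  proof (rule Low_sum)
    fix v assume v: "v \<in> words N (length ws)"
    have c: "concat ws = u" and ne: "\<forall>w\<in>set ws. w \<noteq> []" and nu: "ws \<noteq> [u]"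
      using ws by (auto simp: interval_splits_def)
    have "ws \<noteq> []" using c lu by auto
    moreover have "\<not> (\<exists>w. ws = [w])" using c nu by auto
    ultimately have l2: "2 \<le> length ws"
      by (cases ws; cases "tl ws") auto
    have len: "length v = length ws" using v by (simp add: words_def)
    have "deg (MM ws v) < length u - 1"
      using deg_MM[OF len] length_concat_nonempty[OF ne] l2 lu unfolding c by linarith
    moreover have "validm N (MM ws v)"
    proof (rule validm_MM[OF v], intro ballI subsetI)
      fix w x assume "w \<in> set ws" "x \<in> set w"
      hence "x \<in> set u" using c by auto
      thus "x \<in> {1..N}" using uN by auto
    qed
    moreover have "validm N (ygen i v)"
      using v i by (auto simp: ygen_def validm_def valid_gen_def words_def)
    ultimately show "smul (cf i ws v) (basis (MM ws v, ygen i v)) \<in> Low N (length u - 1)"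
      by (intro Low_smul Low_basis) auto
  qed
  hence "(\<Sum>ws\<in>interval_splits u - {[u]}. F ws) \<in> Low N (length u - 1)"
    by (rule Low_sum)
  thus ?thesis unfolding D F1 by (rule bexI[rotated]) simp
qed

lemma HHmul_add_l: "HHmul (x + y) z = HHmul x z + HHmul y z"
  by (rule linmap_add[OF bilin_linmap_l[OF bilin_HHmul]])
lemma HHmul_add_r: "HHmul x (y + z) = HHmul x y + HHmul x z"
  by (rule linmap_add[OF bilin_linmap_r[OF bilin_HHmul]])

lemma DS:
  assumes "validm N mo"
  shows "\<exists>R\<in>Low N (deg mo). DM N mo = basis (mo, []) + R"
  using assms
proof (induction mo)
  case Nil
  show ?case by (rule bexI[of _ 0]) (auto simp: HHone_def)
next
  case (Cons g mo)
  obtain i u where g: "g = (i, u)" by (cases g)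
  have vg: "valid_gen N (i, u)" and vm: "validm N mo" using Cons.prems g by auto
  obtain R1 where R1: "R1 \<in> Low N (length u - 1)" "Delta_gen N (i, u) = basis ([(i, u)], []) + R1"
    using DG[OF vg] by blast
  obtain R2 where R2: "R2 \<in> Low N (deg mo)" "DM N mo = basis (mo, []) + R2"
    using Cons.IH[OF vm] by blast
  have dg: "deg (g # mo) = (length u - 1) + deg mo" by (simp add: deg_Cons g)
  have "DM N (g # mo) = basis (g # mo, []) +
      (HHmul (basis ([(i, u)], [])) R2 + HHmul R1 (basis (mo, [])) + HHmul R1 R2)"
    by (simp add: DM_Cons g R1(2) R2(2) HHmul_add_l HHmul_add_r pmul_def algebra_simps)
  moreover have "HHmul (basis ([(i, u)], [])) R2 \<in> Low N (deg (g # mo))"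
    by (rule Low_HHmul) (use R2(1) vg in \<open>auto simp: Low_def dg deg_Cons g\<close>)
  moreover have "HHmul R1 (basis (mo, [])) \<in> Low N (deg (g # mo))"
    by (rule Low_HHmul) (use R1(1) vm in \<open>auto simp: Low_def dg\<close>)
  moreover have "HHmul R1 R2 \<in> Low N (deg (g # mo))"
    by (rule Low_HHmul) (use R1(1) R2(1) in \<open>fastforce simp: Low_def dg\<close>)
  ultimately show ?case by (blast intro: Low_add)
qed



lemma Hcar_iff: "x \<in> Hcar N \<longleftrightarrow> (\<forall>m\<in>ks x. validm N m)"
  by (simp add: Hcar_def validm_def)
lemma basis_Hcar: "validm N m \<Longrightarrow> basis m \<in> Hcar N" by (simp add: Hcar_iff)
lemma Hcar_add: "x \<in> Hcar N \<Longrightarrow> y \<in> Hcar N \<Longrightarrow> x + y \<in> Hcar N"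
  unfolding Hcar_iff by (auto dest!: subsetD[OF keys_add])
lemma Hcar_smul: "x \<in> Hcar N \<Longrightarrow> smul c x \<in> Hcar N"
  unfolding Hcar_iff by (auto dest!: subsetD[OF keys_smul])
lemma Hcar_zero: "0 \<in> Hcar N" by (simp add: Hcar_iff)
lemma Hcar_sum: "(\<And>a. a \<in> A \<Longrightarrow> f a \<in> Hcar N) \<Longrightarrow> sum f A \<in> Hcar N"
  by (induction A rule: infinite_finite_induct) (auto intro: Hcar_add Hcar_zero)
lemma Hcar_lin: "(\<And>a. a \<in> ks x \<Longrightarrow> f a \<in> Hcar N) \<Longrightarrow> lin f x \<in> Hcar N"
  unfolding lin_def by (intro Hcar_sum Hcar_smul) auto

lemma validm_s: "validm N (s_mono m) \<longleftrightarrow> validm N m"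
  by (induction m) (auto simp: s_mono_Cons valid_gen_def)
lemma deg_s: "deg (s_mono m) = deg m"
  by (induction m) (auto simp: s_mono_Cons deg_Cons)

lemma sH_Hcar: "x \<in> Hcar N \<Longrightarrow> sH x \<in> Hcar N"
  unfolding sH_def by (rule Hcar_lin) (auto simp: Hcar_iff validm_s)

lemma Hmul_smul_l: "Hmul (smul c x) y = smul c (Hmul x y)"
  by (rule linmap_smul[OF bilin_linmap_l[OF bilin_Hmul]])
lemma Hmul_smul_r: "Hmul x (smul c y) = smul c (Hmul x y)"
  by (rule linmap_smul[OF bilin_linmap_r[OF bilin_Hmul]])
lemma Hmul_diff_l: "Hmul (x - y) z = Hmul x z - Hmul y z"
  by (rule linmap_diff[OF bilin_linmap_l[OF bilin_Hmul]])
lemma Hmul_zero_l[simp]: "Hmul 0 z = 0"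
  by (rule linmap_zero[OF bilin_linmap_l[OF bilin_Hmul]])

lemma bilin_add_l: "bilin F \<Longrightarrow> F (x + y) z = F x z + F y z"
  by (rule linmap_add[OF bilin_linmap_l])
lemma bilin_add_r: "bilin F \<Longrightarrow> F x (y + z) = F x y + F x z"
  by (rule linmap_add[OF bilin_linmap_r])

lemma bilin_diff: "bilin F \<Longrightarrow> bilin G \<Longrightarrow> bilin (\<lambda>x y. F x y - G x y)"
  unfolding bilin_def linmap_def by (simp add: smul_diff_r)

definition eps :: "mono \<Rightarrow> complex" where "eps m = (if m = [] then 1 else 0)"
lemma epsH_basis: "epsH (basis m) = eps m"
  by (simp add: epsH_def eps_def lookup_basis)

context
  fixes N :: nat and S :: "H \<Rightarrow> H"
  assumes anti: "is_antipode N S"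
begin

abbreviation Sl where "Sl \<equiv> lin (\<lambda>a. S (basis a))"

lemma S_Hcar: "x \<in> Hcar N \<Longrightarrow> S x \<in> Hcar N"
  using anti by (simp add: is_antipode_def)

lemma S_eq_Sl: assumes x: "x \<in> Hcar N" shows "S x = Sl x"
proof -
  have add: "S (y + z) = S y + S z" 
    if "y \<in> Hcar N" "z \<in> Hcar N" for y z
    using anti that unfolding is_antipode_def by blast
  have sm: "S (smul c y) = smul c (S y)" if "y \<in> Hcar N" for y c
    using anti that unfolding is_antipode_def by blast
  have S0: "S 0 = 0" using add[OF Hcar_zero Hcar_zero] by simp
  have ba: "a \<in> ks x \<Longrightarrow> basis a \<in> Hcar N" for a using x by (simp add: Hcar_iff basis_Hcar)
  have "A \<subseteq> ks x \<Longrightarrow> S (\<Sum>a\<in>A. smul (lk x a) (basis a)) = (\<Sum>a\<in>A. smul (lk x a) (S (basis a)))"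
    if "finite A" for A
    using that
  proof (induction A rule: finite_induct)
    case empty thus ?case by (simp add: S0)
  next
    case (insert a A)
    have "S (\<Sum>a\<in>insert a A. smul (lk x a) (basis a))
        = S (smul (lk x a) (basis a) + (\<Sum>a\<in>A. smul (lk x a) (basis a)))"
      using insert by simp
    also have "\<dots> = smul (lk x a) (S (basis a)) + S (\<Sum>a\<in>A. smul (lk x a) (basis a))"
      using insert ba by (subst add) (auto intro!: Hcar_smul Hcar_sum simp: sm)
    finally show ?case using insert by simp
  qed
  from this[OF finite_keys order_refl] show ?thesis
    by (simp add: lin_def[symmetric] lin_id)
qed

abbreviation Ls where "Ls t \<equiv> lin (\<lambda>k. Hmul (S (basis (fst k))) (basis (snd k))) t"
abbreviation Rs where "Rs t \<equiv> lin (\<lambda>k. Hmul (basis (fst k)) (S (basis (snd k)))) t"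

lemma LS_eq: "mH (tensmap S id t) = Ls t"
  unfolding tensmap_def by (simp add: linmap_apply_lin[OF linmap_mH] mH_tens case_prod_beta)
lemma RS_eq: "mH (tensmap id S t) = Rs t"
  unfolding tensmap_def by (simp add: linmap_apply_lin[OF linmap_mH] mH_tens case_prod_beta)

lemma left_anti: assumes v: "validm N m" shows "Ls (DM N m) = smul (eps m) Hone"
proof -
  have "mH (tensmap S id (Delta N (basis m))) = smul (epsH (basis m)) Hone"
    using anti basis_Hcar[OF v] unfolding is_antipode_def by blast
  thus ?thesis by (simp add: LS_eq epsH_basis)
qed
lemma right_anti: assumes v: "validm N m" shows "Rs (DM N m) = smul (eps m) Hone"
proof -
  have "mH (tensmap id S (Delta N (basis m))) = smul (epsH (basis m)) Hone"
    using anti basis_Hcar[OF v] unfolding is_antipode_def by blast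
  thus ?thesis by (simp add: RS_eq epsH_basis)
qed

lemma S_one: "S Hone = Hone"
  using left_anti[of "[]"] by (simp add: HHone_def eps_def Hone_def[symmetric])

end


context
  fixes N :: nat and S :: "H \<Rightarrow> H"
  assumes anti: "is_antipode N S"
begin

lemma anti_mult_basis:
  assumes "validm N a" "validm N b"
  shows "S (basis (a @ b)) = Hmul (S (basis b)) (S (basis a))"
proof -
  define E where "E p p' = S (basis (p @ p')) - Hmul (S (basis p')) (S (basis p))" for p p'
  have "\<forall>a b. validm N a \<longrightarrow> validm N b \<longrightarrow> deg a + deg b = n \<longrightarrow> E a b = 0" for n
  proof (induction n rule: less_induct)
    case (less n)
    show ?case
    proof (intro allI impI)
      fix a b assume va: "validm N a" and vb: "validm N b" and dn: "deg a + deg b = n"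
      have IH: "E p p' = 0" if "validm N p" "validm N p'" "deg p + deg p' < deg a + deg b" for p p'
        using less.IH[of "deg p + deg p'"] that dn by blast
      define F1 where "F1 s t = Ls S (HHmul s t)" for s t
      define F2 where "F2 s t = lin (\<lambda>k'. Hmul (S (basis (fst k'))) (Hmul (Ls S s) (basis (snd k')))) t" for s t
      define G where "G s t = lin (\<lambda>k. lin (\<lambda>k'. Hmul (E (fst k) (fst k')) (basis (snd k @ snd k'))) t) s" for s t
      have bG: "bilin G" unfolding G_def[abs_def] by (rule bilin_lin2)
      have bF1: "bilin F1" unfolding F1_def[abs_def]
        by (rule bilin_compose[OF bilin_HHmul linmap_lin linmap_id linmap_id, simplified])
      have bF2: "bilin F2"
        unfolding bilin_def F2_def
      proof (intro allI conjI)
        fix s show "linmap (\<lambda>t. lin (\<lambda>k'. Hmul (S (basis (fst k'))) (Hmul (Ls S s) (basis (snd k')))) t)"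
          by simp
      next
        fix t show "linmap (\<lambda>s. lin (\<lambda>k'. Hmul (S (basis (fst k'))) (Hmul (Ls S s) (basis (snd k')))) t)"
          by (rule linmap_fun_lin, rule linmap_comp[OF bilin_linmap_r[OF bilin_Hmul]
                linmap_comp[OF bilin_linmap_l[OF bilin_Hmul] linmap_lin]])
      qed
      have FG: "F1 s t - F2 s t = G s t" for s t
      proof (rule bilin_eq[where F = "\<lambda>s t. F1 s t - F2 s t" and G = G, OF bilin_diff[OF bF1 bF2] bG])
        fix k k' :: "mono \<times> mono"
        obtain p q p' q' where k: "k = (p, q)" "k' = (p', q')" by (cases k, cases k')
        show "F1 (basis k) (basis k') - F2 (basis k) (basis k') = G (basis k) (basis k')"
          by (simp add: F1_def F2_def G_def k pmul_def E_def Hmul_diff_l Hmul_assoc)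
      qed
      obtain R1 where R1: "R1 \<in> Low N (deg a)" "DM N a = basis (a, []) + R1" using DS[OF va] by blast
      obtain R2 where R2: "R2 \<in> Low N (deg b)" "DM N b = basis (b, []) + R2" using DS[OF vb] by blast
      have f1: "F1 (DM N a) (DM N b) = smul (eps a * eps b) Hone"
        unfolding F1_def DM_append[symmetric] using left_anti[OF anti, of "a @ b"] va vb
        by (simp add: eps_def)
      have f2: "F2 (DM N a) (DM N b) = smul (eps a * eps b) Hone"
      proof -
        have "F2 (DM N a) (DM N b) = lin (\<lambda>k'. smul (eps a) (Hmul (S (basis (fst k'))) (basis (snd k')))) (DM N b)"
          unfolding F2_def using left_anti[OF anti va] by (simp add: Hmul_smul_l Hmul_smul_r)
        also have "\<dots> = smul (eps a) (Ls S (DM N b))" by (rule lin_fun_smul)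
        also have "\<dots> = smul (eps a * eps b) Hone" using left_anti[OF anti vb] by simp
        finally show ?thesis .
      qed
      have G0: "G (DM N a) (DM N b) = 0" using FG[of "DM N a" "DM N b"] f1 f2 by simp
      have Gs: "G (DM N a) (DM N b) = G (basis (a, [])) (basis (b, [])) + G (basis (a, [])) R2
          + (G R1 (basis (b, [])) + G R1 R2)"
        by (simp add: R1(2) R2(2) bilin_add_l[OF bG] bilin_add_r[OF bG] algebra_simps)
      have g1: "G (basis (a, [])) (basis (b, [])) = E a b"
        by (simp add: G_def Hone_def[symmetric])
      have z2: "E a (fst k') = 0" if "k' \<in> ks R2" for k'
      proof -
        have "validm N (fst k')" "deg (fst k') < deg b" using R2(1) that by (auto simp: Low_def)
        thus ?thesis using IH va by simp
      qed
      have z1: "E (fst k) p' = 0" if "k \<in> ks R1" "validm N p'" "deg p' \<le> deg b" for k p'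
      proof -
        have "validm N (fst k)" "deg (fst k) < deg a" using R1(1) that(1) by (auto simp: Low_def)
        thus ?thesis using IH that(2,3) by simp
      qed
      have g2: "G (basis (a, [])) R2 = 0"
      proof -
        have "G (basis (a, [])) R2 = lin (\<lambda>k'. Hmul (E a (fst k')) (basis (snd k'))) R2"
          by (simp add: G_def)
        also have "\<dots> = lin (\<lambda>k'. 0) R2" by (rule lin_cong) (simp add: z2)
        finally show ?thesis by simp
      qed
      have g3: "G R1 (basis (b, [])) = 0"
      proof -
        have "G R1 (basis (b, [])) = lin (\<lambda>k. Hmul (E (fst k) b) (basis (snd k))) R1"
          by (simp add: G_def)
        also have "\<dots> = lin (\<lambda>k. 0) R1" by (rule lin_cong) (simp add: z1 vb)
        finally show ?thesis by simp
      qed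
      have g4: "G R1 R2 = 0"
      proof -
        have "G R1 R2 = lin (\<lambda>k. lin (\<lambda>k'. 0) R2) R1" unfolding G_def
        proof (rule lin_cong, rule lin_cong)
          fix k k' assume "k \<in> ks R1" "k' \<in> ks R2"
          moreover have "validm N (fst k')" "deg (fst k') < deg b" using R2(1) \<open>k' \<in> ks R2\<close> by (auto simp: Low_def)
          ultimately show "Hmul (E (fst k) (fst k')) (basis (snd k @ snd k')) = 0" by (simp add: z1)
        qed
        thus ?thesis by simp
      qed
      show "E a b = 0" using G0 Gs g1 g2 g3 g4 by simp
    qed
  qed
  thus ?thesis using assms unfolding E_def by simp
qed

lemma anti_mult:
  assumes x: "x \<in> Hcar N" and y: "y \<in> Hcar N"
  shows "Sl S (Hmul x y) = Hmul (Sl S y) (Sl S x)"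
proof -
  have b1: "bilin (\<lambda>x y. Sl S (Hmul x y))"
    by (rule bilin_compose[OF bilin_Hmul linmap_lin linmap_id linmap_id, simplified])
  have b2: "bilin (\<lambda>x y. Hmul (Sl S y) (Sl S x))"
    by (rule bilin_swap[OF bilin_compose[OF bilin_Hmul linmap_id linmap_lin linmap_lin, simplified]])
  have "Sl S (Hmul x y) = lin (\<lambda>a. lin (\<lambda>b. Sl S (Hmul (basis a) (basis b))) y) x"
    by (rule bilin_expand[OF b1])
  also have "\<dots> = lin (\<lambda>a. lin (\<lambda>b. Hmul (Sl S (basis b)) (Sl S (basis a))) y) x"
  proof (rule lin_cong, rule lin_cong)
    fix a b assume "a \<in> ks x" "b \<in> ks y"
    hence "validm N a" "validm N b" using x y by (auto simp: Hcar_iff)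
    thus "Sl S (Hmul (basis a) (basis b)) = Hmul (Sl S (basis b)) (Sl S (basis a))"
      by (simp add: anti_mult_basis)
  qed
  also have "\<dots> = Hmul (Sl S y) (Sl S x)"
    by (rule bilin_expand[OF b2, symmetric])
  finally show ?thesis .
qed

end


context
  fixes N :: nat and S :: "H \<Rightarrow> H"
  assumes anti: "is_antipode N S"
begin

lemma Rb_Hcar: "validm N p \<Longrightarrow> sH (S (basis (s_mono p))) \<in> Hcar N"
  by (intro sH_Hcar S_Hcar[OF anti] basis_Hcar) (simp add: validm_s)

lemma eps_s: "eps (s_mono m) = eps m"
  by (auto simp: eps_def s_mono_def)

lemma SR_basis: "validm N mo \<Longrightarrow> Sl S (sH (S (basis (s_mono mo)))) = basis mo"
proof (induction "deg mo" arbitrary: mo rule: less_induct)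
  case less
  have vm: "validm N mo" by fact
  have IH: "Sl S (sH (S (basis (s_mono p)))) = basis p" if "validm N p" "deg p < deg mo" for p
    using less.hyps that by blast
  obtain Rr where Rr: "Rr \<in> Low N (deg mo)" "DM N mo = basis (mo, []) + Rr" using DS[OF vm] by blast
  have TD: "T (DM N mo) = DM N (s_mono mo)" using T_DM[of N "s_mono mo"] by simp
  have vs: "validm N (s_mono mo)" using vm by (simp add: validm_s)
  define e where "e = eps mo"
  define M0 where "M0 t = lin (\<lambda>k. Hmul (S (basis (s_mono (fst k)))) (basis (s_mono (snd k)))) t" for t
  have LT: "Ls S (T t) = M0 t" for t
    unfolding M0_def
    by (rule linmap_eq[where F = "\<lambda>t. Ls S (T t)"], rule linmap_comp[OF linmap_lin linmap_T], simp)
       (simp add: T_basis)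
  have "Ls S (DM N (s_mono mo)) = smul (eps (s_mono mo)) Hone" by (rule left_anti[OF anti vs])
  hence "M0 (DM N mo) = smul e Hone" by (simp only: TD[symmetric] LT e_def eps_s)
  hence "S (basis (s_mono mo)) + M0 Rr = smul e Hone"
    unfolding Rr(2) M0_def lin_add by (simp add: Hone_def[symmetric])
  hence SB: "S (basis (s_mono mo)) = smul e Hone - M0 Rr" by (simp add: eq_diff_eq)
  have sM: "sH (M0 Rr) = lin (\<lambda>k. Hmul (basis (snd k)) (sH (S (basis (s_mono (fst k)))))) Rr"
    unfolding M0_def by (simp add: linmap_apply_lin[OF linmap_sH] sH_Hmul)
  have Rb: "sH (S (basis (s_mono mo))) = smul e Hone - sH (M0 Rr)"
    by (simp add: SB linmap_diff[OF linmap_sH] linmap_smul[OF linmap_sH])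
  have Sl1: "Sl S Hone = Hone" using S_one[OF anti] by (simp add: Hone_def)
  have "Sl S (sH (M0 Rr)) = lin (\<lambda>k. Sl S (Hmul (basis (snd k)) (sH (S (basis (s_mono (fst k))))))) Rr"
    unfolding sM by (rule linmap_apply_lin[OF linmap_lin])
  also have "\<dots> = Rs S Rr"
  proof (rule lin_cong)
    fix k assume k: "k \<in> ks Rr"
    hence v1: "validm N (fst k)" and v2: "validm N (snd k)" and dk: "deg (fst k) < deg mo"
      using Rr(1) by (auto simp: Low_def)
    have "Sl S (Hmul (basis (snd k)) (sH (S (basis (s_mono (fst k))))))
        = Hmul (Sl S (sH (S (basis (s_mono (fst k)))))) (Sl S (basis (snd k)))"
      by (rule anti_mult[OF anti basis_Hcar[OF v2] Rb_Hcar[OF v1]])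
    also have "\<dots> = Hmul (basis (fst k)) (S (basis (snd k)))"
      using IH[OF v1 dk] by simp
    finally show "Sl S (Hmul (basis (snd k)) (sH (S (basis (s_mono (fst k))))))
        = Hmul (basis (fst k)) (S (basis (snd k)))" .
  qed
  finally have SM: "Sl S (sH (M0 Rr)) = Rs S Rr" .
  have "Rs S (DM N mo) = smul e Hone" using right_anti[OF anti vm] e_def by simp
  hence "basis mo + Rs S Rr = smul e Hone"
    unfolding Rr(2) lin_add using S_one[OF anti] by (simp add: Hone_def[symmetric])
  hence RR: "Rs S Rr = smul e Hone - basis mo" by (simp add: eq_diff_eq add.commute)
  show ?case
    unfolding Rb linmap_diff[OF linmap_lin] linmap_smul[OF linmap_lin] Sl1 SM RR by simp
qed

lemma SR:
  assumes x: "x \<in> Hcar N"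
  shows "S (sH (S (sH x))) = x" and "sH (S (sH x)) \<in> Hcar N"
proof -
  have sx: "sH x \<in> Hcar N" by (rule sH_Hcar[OF x])
  show z: "sH (S (sH x)) \<in> Hcar N" by (rule sH_Hcar[OF S_Hcar[OF anti sx]])
  have "S (sH (S (sH x))) = Sl S (sH (Sl S (sH x)))"
    using S_eq_Sl[OF anti z] S_eq_Sl[OF anti sx] by simp
  also have "\<dots> = lin (\<lambda>a. Sl S (sH (Sl S (sH (basis a))))) x"
    by (rule linmap_eq_lin[where L = "\<lambda>x. Sl S (sH (Sl S (sH x)))"],
        rule linmap_comp[OF linmap_lin linmap_comp[OF linmap_sH linmap_comp[OF linmap_lin linmap_sH]]])
  also have "\<dots> = lin basis x"
  proof (rule lin_cong)
    fix a assume "a \<in> ks x"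
    hence "validm N a" using x by (simp add: Hcar_iff)
    thus "Sl S (sH (Sl S (sH (basis a)))) = basis a" using SR_basis by simp
  qed
  also have "\<dots> = x" by (rule lin_id)
  finally show "S (sH (S (sH x))) = x" .
qed

end

theorem lemma5:
  fixes N :: nat and S_H S_L :: "H \<Rightarrow> H"
  assumes "N \<ge> 1"
    and "is_antipode N S_H"
    and "\<forall>x\<in>Hcar N. S_L x \<in> Hcar N \<and> S_L (S_H x) = x \<and> S_H (S_L x) = x"
  shows "(\<forall>t\<in>HHcar N. mop t = sH (mH (tensmap sH sH t)))
       \<and> (\<forall>x\<in>Hcar N. Delta N x = tensmap sH sH (Delta N (sH x)))
       \<and> (\<forall>x\<in>Hcar N. S_L x = sH (S_H (sH x)))"
proof (intro conjI ballI)
  fix t show "mop t = sH (mH (tensmap sH sH t))" by (rule part1)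
next
  fix x show "Delta N x = tensmap sH sH (Delta N (sH x))" by (rule part2)
next
  fix x assume x: "x \<in> Hcar N"
  have "S_L (S_H (sH (S_H (sH x)))) = sH (S_H (sH x))"
    using assms(3) SR(2)[OF assms(2) x] by blast
  thus "S_L x = sH (S_H (sH x))" using SR(1)[OF assms(2) x] by simp
qed


end
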